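(* There is an absolute constant $C>0$ such that the following holds. Let $\varepsilon=\varepsilon(n)$ satisfy $\varepsilon\le 1$ and $n\varepsilon(n)\to\infty$ (i.e. $\varepsilon\in[\omega(1/n),1]$). Then for all sufficiently large $n$, in the variable-processor cup game on $n$ cups with $\varepsilon$ resource augmentation, the greedy emptying algorithm guarantees, against every filler and at every time, backlog at most $C\varepsilon^{-1}\log n$.
   Context: The variable-processor cup game with $\varepsilon$ resource augmentation on $n$ cups: there are $n$ cups with real fills $x_1,\dots,x_n$, all initially $0$, and two adaptive players, a filler and an emptier. In each round the filler chooses an integer $1\le p\le n$ and reals $a_1,\dots,a_n\in[0,1]$ with $\sum_i a_i=p$ and replaces each $x_i$ by $x_i+a_i$; then the emptier chooses a set $S$ of exactly $p$ cups and replaces $x_i$ by $\max(0,x_i-(1+\varepsilon))$ for each $i\in S$ (fills never go below $0$). The backlog is $\max_i x_i$. The greedy emptier chooses $S$ to be $p$ cups of largest fill after the filler's move. *)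

theory Defs
  imports Complex_Main
begin

text \<open>Variable-processor cup game on cups 0..n-1. A state is a fill vector nat => real
  (only indices below n matter).\<close>

definition valid_fill :: "nat \<Rightarrow> nat \<Rightarrow> (nat \<Rightarrow> real) \<Rightarrow> bool" where
  "valid_fill n p a \<longleftrightarrow> 1 \<le> p \<and> p \<le> n \<and> (\<forall>i<n. 0 \<le> a i \<and> a i \<le> 1) \<and> (\<Sum>i<n. a i) = real p"

definition greedy_set :: "nat \<Rightarrow> (nat \<Rightarrow> real) \<Rightarrow> nat \<Rightarrow> nat set \<Rightarrow> bool" where
  "greedy_set n y p S \<longleftrightarrow> S \<subseteq> {..<n} \<and> card S = p \<and> (\<forall>i\<in>S. \<forall>j\<in>{..<n} - S. y j \<le> y i)"

text \<open>x t is the fill vector after t rounds of play between an arbitrary (adaptive) filler and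
  the greedy emptier with eps resource augmentation (ties broken arbitrarily).\<close>
definition greedy_play :: "nat \<Rightarrow> real \<Rightarrow> (nat \<Rightarrow> nat \<Rightarrow> real) \<Rightarrow> bool" where
  "greedy_play n eps x \<longleftrightarrow>
     (\<forall>i<n. x 0 i = 0) \<and>
     (\<forall>t. \<exists>p a S. valid_fill n p a \<and> greedy_set n (\<lambda>i. x t i + a i) p S \<and>
        (\<forall>i<n. x (Suc t) i =
           (if i \<in> S then max 0 (x t i + a i - (1 + eps)) else x t i + a i)))"

end

theory Submission
  imports Defs
begin

lemma key_ineq:
  fixes e a :: real
  assumes "0 < e" "e \<le> 1" "0 \<le> a" "a \<le> 1"
  shows "(e/4) * (1 - a) \<le> exp (-(e/4) * a) - exp (-(e/4) * (1 + e))"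
proof -
  define l where "l = e/4"
  have l: "0 < l" "l \<le> 1/4" using assms by (auto simp: l_def)
  have "exp (-l * a) = exp (-l*(1+e)) * exp (l*(1+e-a))"
    by (simp add: exp_add[symmetric] algebra_simps)
  also have "\<dots> \<ge> exp (-l*(1+e)) * (1 + l*(1+e-a))"
    by (intro mult_left_mono) (auto simp: exp_ge_add_one_self add.commute)
  finally have 1: "exp (-l*a) - exp (-l*(1+e)) \<ge> exp (-l*(1+e)) * (l*(1+e-a))"
    by (simp add: algebra_simps)
  have 2: "exp (-l*(1+e)) \<ge> 1 - l*(1+e)"
    using exp_ge_add_one_self[of "-l*(1+e)"] by simp
  have 3: "1 - l*(1+e) \<ge> 1 - e/2" using assms by (simp add: l_def field_simps)
  have 4: "(1 - e/2) * (1+e-a) \<ge> 1 - a"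
  proof -
    have "(e/2) * (1+e-a) \<le> (e/2) * 2" using assms by (intro mult_left_mono) auto
    then show ?thesis by (simp add: algebra_simps)
  qed
  have 5: "exp (-l*(1+e)) * (l*(1+e-a)) \<ge> (1 - e/2) * (l*(1+e-a))"
    using 2 3 l assms by (intro mult_right_mono) auto
  have "l * (1 - a) \<le> (1 - e/2) * (l*(1+e-a))"
    using mult_left_mono[OF 4, of l] l by (simp add: algebra_simps)
  with 1 5 show ?thesis by (simp add: l_def)
qed

lemma one_minus_exp:
  fixes v :: real assumes "0 \<le> v" "v \<le> 1"
  shows "v/2 \<le> 1 - exp (-v)"
proof -
  have "1 + v \<le> exp v" using exp_ge_add_one_self[of v] by simp
  then have "exp (-v) \<le> 1/(1+v)" using assms
    by (simp add: exp_minus field_simps)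
  also have "1/(1+v) \<le> 1 - v/2" using assms
    by (simp add: field_simps) (smt (verit) mult_left_le)
  finally show ?thesis by simp
qed

lemma step_good:
  fixes e :: real
  assumes e: "0 < e" "e \<le> 1" and vf: "valid_fill n p a"
    and gs: "greedy_set n (\<lambda>i. x0 i + a i) p S"
    and x1: "\<forall>i<n. x1 i = (if i \<in> S then max 0 (x0 i + a i - (1 + e)) else x0 i + a i)"
    and good: "\<forall>i\<in>S. 1 + e \<le> x0 i + a i"
  shows "(\<Sum>i<n. exp (e/4 * x1 i)) \<le> (\<Sum>i<n. exp (e/4 * x0 i))"
proof -
  define l where "l = e/4"
  have l: "0 < l" using e by (simp add: l_def)
  define y where "y i = x0 i + a i" for i
  have Sn: "S \<subseteq> {..<n}" and cS: "card S = p" and gr: "\<forall>i\<in>S. \<forall>j\<in>{..<n} - S. y j \<le> y i"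
    using gs by (auto simp: greedy_set_def y_def)
  have p1: "1 \<le> p" and a01: "\<forall>i<n. 0 \<le> a i \<and> a i \<le> 1" and sa: "(\<Sum>i<n. a i) = real p"
    using vf by (auto simp: valid_fill_def)
  have fS: "finite S" using Sn finite_subset by blast
  have neS: "S \<noteq> {}" using cS p1 by auto
  define m where "m = Min (y ` S)"
  have mle: "m \<le> y i" if "i \<in> S" for i using fS that by (simp add: m_def)
  have mge: "y j \<le> m" if "j \<in> {..<n} - S" for j
    using fS neS gr that unfolding m_def by (subst Min_ge_iff) auto
  have A: "exp (l * x1 j) - exp (l * x0 j) \<le> l * a j * exp (l * m)" if j: "j \<in> {..<n} - S" for j
  proof -
    have "x1 j = y j" using x1 j by (simp add: y_def)
    have "exp (l * x0 j) = exp (l * y j) * exp (- (l * a j))"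
      by (simp add: y_def exp_add[symmetric] algebra_simps)
    also have "\<dots> \<ge> exp (l * y j) * (1 - l * a j)"
      using exp_ge_add_one_self[of "- (l * a j)"] by (intro mult_left_mono) auto
    finally have "exp (l * x1 j) - exp (l * x0 j) \<le> l * a j * exp (l * y j)"
      using \<open>x1 j = y j\<close> by (simp add: algebra_simps)
    also have "\<dots> \<le> l * a j * exp (l * m)"
      using mge[OF j] l a01 j by (intro mult_left_mono) auto
    finally show ?thesis .
  qed
  have B: "l * (1 - a i) * exp (l * m) \<le> exp (l * x0 i) - exp (l * x1 i)" if i: "i \<in> S" for i
  proof -
    have iN: "i < n" using Sn i by auto
    have "x1 i = y i - (1 + e)" using x1 iN i good by (auto simp: y_def)
    have k: "l * (1 - a i) \<le> exp (-l * a i) - exp (-l * (1 + e))"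
      using key_ineq[of e "a i"] e a01 iN by (simp add: l_def)
    have eq: "exp (l * x0 i) - exp (l * x1 i) = exp (l * y i) * (exp (-l * a i) - exp (-l * (1 + e)))"
    proof -
      have "l * x1 i = l * y i + (-l * (1 + e))" unfolding \<open>x1 i = y i - (1 + e)\<close>
        by (simp add: algebra_simps)
      moreover have "l * x0 i = l * y i + (-l * a i)" by (simp add: y_def algebra_simps)
      ultimately show ?thesis by (simp only: exp_add right_diff_distrib)
    qed
    have "l * (1 - a i) * exp (l * m) \<le> l * (1 - a i) * exp (l * y i)"
      using mle[OF i] l a01 iN by (intro mult_left_mono) auto
    also have "\<dots> \<le> exp (l * y i) * (exp (-l * a i) - exp (-l * (1 + e)))"
      using k by (simp add: mult.commute)
    finally show ?thesis using eq by simp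
  qed
  have split: "(\<Sum>i<n. f i) = (\<Sum>i\<in>S. f i) + (\<Sum>i\<in>{..<n} - S. f i)" for f :: "nat \<Rightarrow> real"
    using Sn by (metis finite_lessThan sum.subset_diff add.commute)
  have "(\<Sum>i\<in>{..<n} - S. a i) = (\<Sum>i\<in>S. (1 - a i))"
    using split[of a] sa cS by (simp add: sum_subtractf)
  have "(\<Sum>i<n. exp (l * x1 i)) - (\<Sum>i<n. exp (l * x0 i))
     = (\<Sum>i\<in>{..<n} - S. exp (l * x1 i) - exp (l * x0 i)) - (\<Sum>i\<in>S. exp (l * x0 i) - exp (l * x1 i))"
    using split[of "\<lambda>i. exp (l * x1 i)"] split[of "\<lambda>i. exp (l * x0 i)"]
    by (simp add: sum_subtractf)
  also have "\<dots> \<le> (\<Sum>i\<in>{..<n} - S. l * a i * exp (l * m)) - (\<Sum>i\<in>S. l * (1 - a i) * exp (l * m))"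
    using A B by (intro diff_mono sum_mono) auto
  also have "\<dots> = 0"
    using \<open>(\<Sum>i\<in>{..<n} - S. a i) = (\<Sum>i\<in>S. (1 - a i))\<close>
    by (simp add: sum_distrib_right[symmetric] sum_distrib_left[symmetric] mult.assoc)
  finally show ?thesis by (simp add: l_def)
qed

lemma step:
  fixes e :: real
  assumes e: "0 < e" "e \<le> 1" and vf: "valid_fill n p a"
    and gs: "greedy_set n (\<lambda>i. x0 i + a i) p S"
    and x1: "\<forall>i<n. x1 i = (if i \<in> S then max 0 (x0 i + a i - (1 + e)) else x0 i + a i)"
    and inv: "(\<Sum>i<n. exp (e/4 * x0 i)) \<le> 24 * real n / e^2"
  shows "(\<Sum>i<n. exp (e/4 * x1 i)) \<le> 24 * real n / e^2"
proof (cases "\<forall>i\<in>S. 1 + e \<le> x0 i + a i")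
  case True
  then show ?thesis using step_good[OF e vf gs x1 True] inv by linarith
next
  case False
  define l where "l = e/4"
  have l: "0 < l" using e by (simp add: l_def)
  define y where "y i = x0 i + a i" for i
  have Sn: "S \<subseteq> {..<n}" and gr: "\<forall>i\<in>S. \<forall>j\<in>{..<n} - S. y j \<le> y i"
    using gs by (auto simp: greedy_set_def y_def)
  have a01: "\<forall>i<n. 0 \<le> a i \<and> a i \<le> 1"
    using vf by (auto simp: valid_fill_def)
  obtain i0 where i0: "i0 \<in> S" "y i0 < 1 + e" using False by (auto simp: y_def not_le)
  have per: "exp (l * x1 i) \<le> exp (2 * l) + exp (- (l * e)) * exp (l * x0 i)" if i: "i < n" for i
  proof (cases "i \<in> S")
    case False
    then have "y i \<le> y i0" using gr i0 i by auto
    then have "y i \<le> 2" using i0 e by linarith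
    then have "exp (l * x1 i) \<le> exp (2 * l)" using x1 i False l by (simp add: y_def mult.commute)
    then show ?thesis by (smt (verit) exp_gt_zero mult_pos_pos)
  next
    case True
    show ?thesis
    proof (cases "y i < 1 + e")
      case True
      with \<open>i \<in> S\<close> x1 i have "x1 i = 0" by (simp add: y_def)
      then have "exp (l * x1 i) \<le> exp (2 * l)" using l by simp
      then show ?thesis by (smt (verit) exp_gt_zero mult_pos_pos)
    next
      case False
      with \<open>i \<in> S\<close> x1 i have "x1 i = y i - (1 + e)" by (simp add: y_def)
      then have "x1 i \<le> x0 i - e" using a01 i by (simp add: y_def)
      then have "l * x1 i \<le> l * (x0 i - e)" using l by (intro mult_left_mono) auto
      then have "l * x1 i \<le> - (l * e) + l * x0 i" by (simp add: algebra_simps)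
      then have "exp (l * x1 i) \<le> exp (- (l * e)) * exp (l * x0 i)" by (simp add: exp_add[symmetric])
      then show ?thesis by (smt (verit) exp_gt_zero)
    qed
  qed
  have "(\<Sum>i<n. exp (l * x1 i)) \<le> (\<Sum>i<n. exp (2 * l) + exp (- (l * e)) * exp (l * x0 i))"
    using per by (intro sum_mono) auto
  also have "\<dots> = real n * exp (2 * l) + exp (- (l * e)) * (\<Sum>i<n. exp (l * x0 i))"
    by (simp add: sum.distrib sum_distrib_left)
  also have "\<dots> \<le> real n * 3 + exp (- (l * e)) * (24 * real n / e^2)"
  proof (intro add_mono mult_left_mono)
    have "exp (2 * l) \<le> exp 1" using e by (simp add: l_def)
    then show "exp (2 * l) \<le> 3" using exp_le by linarith
  qed (use inv in \<open>auto simp: l_def\<close>)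
  also have "\<dots> \<le> 24 * real n / e^2"
  proof -
    have "e^2 \<le> 1" using e by (simp add: power_le_one)
    then have v: "0 \<le> e^2/4" "e^2/4 \<le> 1" by auto
    have "l * e = e^2/4" by (simp add: l_def power2_eq_square)
    then have h: "e^2/8 \<le> 1 - exp (- (l * e))" using one_minus_exp[OF v] by (simp only:)
    have "real n * 3 = (e^2/8) * (24 * real n / e^2)" using e by (simp add: field_simps)
    also have "\<dots> \<le> (1 - exp (- (l * e))) * (24 * real n / e^2)"
      using h e by (intro mult_right_mono) auto
    also have "\<dots> = 24 * real n / e^2 - exp (- (l * e)) * (24 * real n / e^2)"
      by (simp add: left_diff_distrib diff_divide_distrib)
    finally show ?thesis by linarith
  qed
  finally show ?thesis by (simp add: l_def)
qed

lemma invariant: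
  fixes e :: real
  assumes e: "0 < e" "e \<le> 1" and g: "greedy_play n e x"
  shows "(\<Sum>i<n. exp (e/4 * x t i)) \<le> 24 * real n / e^2"
proof (induction t)
  case 0
  have "x 0 i = 0" if "i < n" for i using g that by (simp add: greedy_play_def)
  then have "(\<Sum>i<n. exp (e/4 * x 0 i)) = real n" by simp
  also have "\<dots> \<le> 24 * real n / e^2"
  proof -
    have "e^2 \<le> 1" using e by (simp add: power_le_one)
    then have "1 \<le> 24 / e^2" using e by (simp add: field_simps)
    then show ?thesis using mult_left_mono[of 1 "24 / e^2" "real n"] by (simp add: mult.commute)
  qed
  finally show ?case .
next
  case (Suc t)
  from g obtain p a S where "valid_fill n p a" "greedy_set n (\<lambda>i. x t i + a i) p S"
    "\<forall>i<n. x (Suc t) i = (if i \<in> S then max 0 (x t i + a i - (1 + e)) else x t i + a i)"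
    unfolding greedy_play_def by blast
  from step[OF e this Suc] show ?case .
qed

lemma final_bound:
  fixes e :: real
  assumes e: "0 < e" "e \<le> 1" and g: "greedy_play n e x" and n3: "3 \<le> n" and ne: "1 \<le> real n * e"
    and i: "i < n"
  shows "x t i \<le> 24 * ln (real n) / e"
proof -
  have nn: "(3::real) \<le> real n" using n3 by simp
  have "exp (e/4 * x t i) \<le> (\<Sum>i<n. exp (e/4 * x t i))"
    using i by (intro member_le_sum) auto
  also have "\<dots> \<le> 24 * real n / e^2" by (rule invariant[OF e g])
  finally have h1: "exp (e/4 * x t i) \<le> 24 * real n / e^2" .
  have inv: "1 / e \<le> real n" using ne e by (simp add: field_simps)
  have "1 / e^2 = (1/e)^2" by (simp add: power_divide)
  also have "\<dots> \<le> real n ^ 2" using inv e by (intro power_mono) auto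
  finally have i2: "1 / e^2 \<le> real n ^ 2" .
  have "(24::real) \<le> 3^3" by simp
  also have "\<dots> \<le> real n ^ 3" using nn by (intro power_mono) auto
  finally have i3: "24 \<le> real n ^ 3" .
  have "24 * real n / e^2 = 24 * real n * (1 / e^2)" by simp
  also have "\<dots> \<le> real n ^ 3 * real n * real n ^ 2"
    using i2 i3 nn e by (intro mult_mono) auto
  also have "\<dots> = real n ^ 6" by (simp add: eval_nat_numeral)
  finally have h2: "24 * real n / e^2 \<le> real n ^ 6" .
  have "e/4 * x t i = ln (exp (e/4 * x t i))" by simp
  also have "\<dots> \<le> ln (real n ^ 6)" using h1 h2 n3 by (subst ln_le_cancel_iff) auto
  also have "\<dots> = 6 * ln (real n)" using nn by (simp add: ln_realpow)
  finally have "e/4 * x t i \<le> 6 * ln (real n)" .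
  then show ?thesis using e by (simp add: field_simps)
qed

theorem theorem7p1:
  shows "\<exists>C>0. \<forall>eps :: nat \<Rightarrow> real.
     (\<forall>n. eps n \<le> 1) \<and> filterlim (\<lambda>n. real n * eps n) at_top sequentially \<longrightarrow>
     (\<forall>\<^sub>F n in sequentially. \<forall>x. greedy_play n (eps n) x \<longrightarrow>
        (\<forall>t. \<forall>i<n. x t i \<le> C * ln (real n) / eps n))"
proof (intro exI[of _ 24] conjI allI impI)
  fix eps :: "nat \<Rightarrow> real"
  assume a: "(\<forall>n. eps n \<le> 1) \<and> filterlim (\<lambda>n. real n * eps n) at_top sequentially"
  then have "\<forall>\<^sub>F n in sequentially. 1 \<le> real n * eps n"
    by (simp add: filterlim_at_top)
  moreover have "\<forall>\<^sub>F n in sequentially. 3 \<le> n" by (rule eventually_ge_at_top)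
  ultimately show "\<forall>\<^sub>F n in sequentially. \<forall>x. greedy_play n (eps n) x \<longrightarrow>
        (\<forall>t. \<forall>i<n. x t i \<le> 24 * ln (real n) / eps n)"
  proof eventually_elim
    case (elim n)
    have "0 < eps n"
    proof (rule ccontr)
      assume "\<not> 0 < eps n"
      then have "real n * eps n \<le> 0" by (simp add: mult_nonneg_nonpos)
      with elim show False by linarith
    qed
    with a elim show ?case using final_bound by blast
  qed
qed simp

end
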